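(* Let $\mathcal A_+,\mathcal A_-\subseteq\mathbb R^n$ be disjoint finite sets such that $(\mathcal A_+,\mathcal A_-)$ is nonseparable of dimension $d$, let $D\in\mathcal F_d(\mathcal A_+)$ with $\mathcal A_-\subseteq D$, write $\Lambda(\mathcal A_+,D)=\{\Delta_1,\dots,\Delta_r\}$ and fix $j\in[r]$. Then for each $a\in\mathcal A_+\setminus\operatorname{vertices}(\Delta_j)$ there is a unique facet $\Gamma_a$ of $\Delta_j$ such that $\operatorname{conv}(\Gamma_a\cup\{a\})\in\Lambda(\mathcal A_+,D)$. Consequently the map $\varphi_j:\mathcal A_+\setminus\operatorname{vertices}(\Delta_j)\to[r]\setminus\{j\}$, $a\mapsto\varphi_j(a)$ where $\Delta_{\varphi_j(a)}=\operatorname{conv}(\Gamma_a\cup\{a\})$, is well defined and injective.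
   Context: For disjoint finite sets $\mathcal A_+,\mathcal A_-\subseteq\mathbb R^n$, the dimension of $(\mathcal A_+,\mathcal A_-)$ is $\dim\operatorname{conv}(\mathcal A_+\cup\mathcal A_-)$; let $d$ be this dimension. $\mathcal F(\mathcal A_+)$ is the common refinement of all regular polyhedral subdivisions of the point configuration $\mathcal A_+$, and $\mathcal F_d(\mathcal A_+)$ its $d$-dimensional cells. $(\mathcal A_+,\mathcal A_-)$ is nonseparable if $\mathcal A_-\subseteq\operatorname{relint}(\operatorname{conv}(\mathcal A_+))$ and there is $D\in\mathcal F_d(\mathcal A_+)$ with $\mathcal A_-\subseteq D$. $\Lambda(\mathcal A_+,D)$ is the set of $d$-dimensional simplices $\Delta$ with vertices in $\mathcal A_+$ such that $\operatorname{relint}(D)\subseteq\operatorname{relint}(\Delta)$. $[r]=\{1,\dots,r\}$. *)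

theory Defs
  imports "HOL-Analysis.Analysis"
begin

text \<open>Cells of the regular polyhedral subdivision of the point configuration A
  induced by the height function h: projections conv S of the lower faces of the
  lifted configuration, i.e. S is the (nonempty) set of points of A on which some
  affine function lying weakly below h attains equality.\<close>
definition reg_cells :: "'a::euclidean_space set \<Rightarrow> ('a \<Rightarrow> real) \<Rightarrow> 'a set set" where
  "reg_cells A h = {convex hull S | S. S \<subseteq> A \<and> S \<noteq> {} \<and>
      (\<exists>w c. (\<forall>a\<in>A. w \<bullet> a + c \<le> h a) \<and> S = {a\<in>A. w \<bullet> a + c = h a})}"

definition common_refinement :: "'a::euclidean_space set \<Rightarrow> 'a set set" where
  "common_refinement A = {X. \<exists>c. (\<forall>h. c h \<in> reg_cells A h) \<and> X = (\<Inter>h. c h) \<and> X \<noteq> {}}"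

definition common_refinement_dim :: "int \<Rightarrow> 'a::euclidean_space set \<Rightarrow> 'a set set" where
  "common_refinement_dim d A = {X \<in> common_refinement A. aff_dim X = d}"

definition pair_dim :: "'a::euclidean_space set \<Rightarrow> 'a set \<Rightarrow> int" where
  "pair_dim Ap Am = aff_dim (convex hull (Ap \<union> Am))"

definition nonseparable :: "'a::euclidean_space set \<Rightarrow> 'a set \<Rightarrow> bool" where
  "nonseparable Ap Am \<longleftrightarrow> Am \<subseteq> rel_interior (convex hull Ap) \<and>
     (\<exists>D \<in> common_refinement_dim (pair_dim Ap Am) Ap. Am \<subseteq> D)"

definition vertices :: "'a::euclidean_space set \<Rightarrow> 'a set" where
  "vertices P = {x. x extreme_point_of P}"

definition Lambda :: "int \<Rightarrow> 'a::euclidean_space set \<Rightarrow> 'a set \<Rightarrow> 'a set set" where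
  "Lambda d Ap D = {\<Delta>. d simplex \<Delta> \<and> vertices \<Delta> \<subseteq> Ap \<and> rel_interior D \<subseteq> rel_interior \<Delta>}"

end

theory Submission
  imports Defs
begin

lemma affine_eval:
  fixes w :: "'a::real_inner"
  assumes "sum k X = 1"
  shows "w \<bullet> (\<Sum>x\<in>X. k x *\<^sub>R x) + c0 = (\<Sum>x\<in>X. k x * (w \<bullet> x + c0))"
proof -
  have "(\<Sum>x\<in>X. k x * (w \<bullet> x + c0)) = (\<Sum>x\<in>X. k x * (w \<bullet> x)) + (\<Sum>x\<in>X. k x) * c0"
    by (simp add: distrib_left sum.distrib sum_distrib_right)
  thus ?thesis using assms by (simp add: inner_sum_right)
qed

lemma coord_unique:
  fixes V :: "'a::euclidean_space set"
  assumes ind: "\<not> affine_dependent V" and fV: "finite V"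
    and "sum f V = 1" "sum g V = 1" "(\<Sum>u\<in>V. f u *\<^sub>R u) = (\<Sum>u\<in>V. g u *\<^sub>R u)" and "u \<in> V"
  shows "f u = g u"
proof (rule ccontr)
  assume "f u \<noteq> g u"
  have "affine_dependent V"
    unfolding affine_dependent_explicit_finite[OF fV]
    apply (rule exI[of _ "\<lambda>x. f x - g x"])
    using assms \<open>f u \<noteq> g u\<close> by (auto simp: sum_subtractf scaleR_diff_left)
  with ind show False by simp
qed

lemma rep_shift:
  fixes V :: "'a::euclidean_space set"
  assumes fV: "finite V" and vV: "v \<in> V" and aV: "a \<notin> V"
    and lam1: "(\<Sum>u\<in>V. l u *\<^sub>R u) = a" and lam2: "sum l V = 1"
    and al1: "sum \<alpha> (insert a (V - {v})) = 1"
    and al2: "(\<Sum>x\<in>insert a (V - {v}). \<alpha> x *\<^sub>R x) = p"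
  shows "sum (\<lambda>u. (if u = v then 0 else \<alpha> u) + \<alpha> a * l u) V = 1 \<and>
         (\<Sum>u\<in>V. ((if u = v then 0 else \<alpha> u) + \<alpha> a * l u) *\<^sub>R u) = p"
proof -
  have an: "a \<notin> V - {v}" using aV by simp
  have s1: "sum (\<lambda>u. if u = v then 0 else \<alpha> u) V = sum \<alpha> (V - {v})"
    using fV vV by (simp add: sum.remove)
  have s2: "(\<Sum>u\<in>V. (if u = v then 0 else \<alpha> u) *\<^sub>R u) = (\<Sum>u\<in>V - {v}. \<alpha> u *\<^sub>R u)"
    using fV vV by (simp add: sum.remove)
  have i1: "sum \<alpha> (insert a (V - {v})) = \<alpha> a + sum \<alpha> (V - {v})"
    using fV an by simp
  have i2: "(\<Sum>x\<in>insert a (V - {v}). \<alpha> x *\<^sub>R x) = \<alpha> a *\<^sub>R a + (\<Sum>u\<in>V - {v}. \<alpha> u *\<^sub>R u)"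
    using fV an by simp
  have "sum (\<lambda>u. (if u = v then 0 else \<alpha> u) + \<alpha> a * l u) V
      = sum (\<lambda>u. if u = v then 0 else \<alpha> u) V + \<alpha> a * sum l V"
    by (simp add: sum.distrib sum_distrib_left)
  also have "\<dots> = 1" using s1 i1 al1 lam2 by simp
  finally have A: "sum (\<lambda>u. (if u = v then 0 else \<alpha> u) + \<alpha> a * l u) V = 1" .
  have "(\<Sum>u\<in>V. ((if u = v then 0 else \<alpha> u) + \<alpha> a * l u) *\<^sub>R u)
      = (\<Sum>u\<in>V. (if u = v then 0 else \<alpha> u) *\<^sub>R u) + \<alpha> a *\<^sub>R (\<Sum>u\<in>V. l u *\<^sub>R u)"
    by (simp add: scaleR_add_left sum.distrib scaleR_sum_right)
  also have "\<dots> = p" using s2 i2 al2 lam1 by (simp add: add.commute)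
  finally show ?thesis using A by simp
qed

lemma uniq_vertex:
  fixes V :: "'a::euclidean_space set"
  assumes indV: "\<not> affine_dependent V" and aV: "a \<notin> V" and aH: "a \<in> affine hull V"
    and v1: "v1 \<in> V" and v2: "v2 \<in> V"
    and ind1: "\<not> affine_dependent (insert a (V - {v1}))"
    and ind2: "\<not> affine_dependent (insert a (V - {v2}))"
    and pV: "p \<in> rel_interior (convex hull V)"
    and p1: "p \<in> rel_interior (convex hull (insert a (V - {v1})))"
    and p2: "p \<in> rel_interior (convex hull (insert a (V - {v2})))"
  shows "v1 = v2"
proof (rule ccontr)
  assume ne: "v1 \<noteq> v2"
  have fV: "finite V" using indV aff_independent_finite by blast
  obtain l where l2: "sum l V = 1" and l1: "(\<Sum>u\<in>V. l u *\<^sub>R u) = a"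
    using aH affine_hull_finite[OF fV] by blast
  obtain \<pi> where \<pi>pos: "\<forall>x\<in>V. 0 < \<pi> x" and \<pi>s: "sum \<pi> V = 1" and \<pi>p: "(\<Sum>x\<in>V. \<pi> x *\<^sub>R x) = p"
    using pV rel_interior_convex_hull_explicit[OF indV] by blast
  obtain \<alpha>1 where pos1: "\<forall>x\<in>insert a (V - {v1}). 0 < \<alpha>1 x"
    and s1: "sum \<alpha>1 (insert a (V - {v1})) = 1"
    and r1: "(\<Sum>x\<in>insert a (V - {v1}). \<alpha>1 x *\<^sub>R x) = p"
    using p1 rel_interior_convex_hull_explicit[OF ind1] by blast
  obtain \<alpha>2 where pos2: "\<forall>x\<in>insert a (V - {v2}). 0 < \<alpha>2 x"
    and s2: "sum \<alpha>2 (insert a (V - {v2})) = 1"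
    and r2: "(\<Sum>x\<in>insert a (V - {v2}). \<alpha>2 x *\<^sub>R x) = p"
    using p2 rel_interior_convex_hull_explicit[OF ind2] by blast
  define f1 where "f1 = (\<lambda>u. (if u = v1 then 0 else \<alpha>1 u) + \<alpha>1 a * l u)"
  define f2 where "f2 = (\<lambda>u. (if u = v2 then 0 else \<alpha>2 u) + \<alpha>2 a * l u)"
  have F1: "sum f1 V = 1 \<and> (\<Sum>u\<in>V. f1 u *\<^sub>R u) = p"
    unfolding f1_def by (rule rep_shift[OF fV v1 aV l1 l2 s1 r1])
  have F2: "sum f2 V = 1 \<and> (\<Sum>u\<in>V. f2 u *\<^sub>R u) = p"
    unfolding f2_def by (rule rep_shift[OF fV v2 aV l1 l2 s2 r2])
  have e1: "f1 u = \<pi> u" if "u \<in> V" for u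
    using coord_unique[OF indV fV _ \<pi>s _ that] F1 \<pi>p by simp
  have e2: "f2 u = \<pi> u" if "u \<in> V" for u
    using coord_unique[OF indV fV _ \<pi>s _ that] F2 \<pi>p by simp
  have E1: "\<pi> v1 = \<alpha>1 a * l v1" using e1[OF v1] unfolding f1_def by simp
  have E2: "\<pi> v2 = \<alpha>1 v2 + \<alpha>1 a * l v2" using e1[OF v2] ne unfolding f1_def by simp
  have E3: "\<pi> v2 = \<alpha>2 a * l v2" using e2[OF v2] unfolding f2_def by simp
  have E4: "\<pi> v1 = \<alpha>2 v1 + \<alpha>2 a * l v1" using e2[OF v1] ne unfolding f2_def by simp
  have P1: "\<alpha>1 v2 > 0" using pos1 v2 ne by auto
  have P2: "\<alpha>2 v1 > 0" using pos2 v1 ne by auto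
  have P3: "\<alpha>1 a > 0" using pos1 by auto
  have P4: "\<alpha>2 a > 0" using pos2 by auto
  have P5: "\<pi> v1 > 0" "\<pi> v2 > 0" using \<pi>pos v1 v2 by auto
  have L1: "l v1 > 0" using E1 P3 P5 by (metis zero_less_mult_pos)
  have L2: "l v2 > 0" using E3 P4 P5 by (metis zero_less_mult_pos)
  have "\<alpha>2 a * l v1 < \<alpha>1 a * l v1" using E1 E4 P2 by linarith
  hence A: "\<alpha>2 a < \<alpha>1 a" using L1 by (simp add: mult_less_cancel_right)
  have "\<alpha>1 a * l v2 < \<alpha>2 a * l v2" using E2 E3 P1 by linarith
  hence B: "\<alpha>1 a < \<alpha>2 a" using L2 by (simp add: mult_less_cancel_right)
  show False using A B by simp
qed


lemma card_swap:
  assumes "finite V" "v \<in> V" "a \<notin> V"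
  shows "card (insert a (V - {v})) = card V"
proof -
  have "card V > 0" using assms card_gt_0_iff by blast
  moreover have "card (insert a (V - {v})) = Suc (card (V - {v}))" using assms by simp
  moreover have "card (V - {v}) = card V - 1" using assms by (simp add: card_Diff_singleton)
  ultimately show ?thesis by simp
qed

lemma exist_cell:
  fixes Ap V D :: "'a::euclidean_space set" and a p :: 'a
  assumes fAp: "finite Ap" and VAp: "V \<subseteq> Ap" and indV: "\<not> affine_dependent V"
    and AH: "Ap \<subseteq> affine hull V" and aAp: "a \<in> Ap" and aV: "a \<notin> V"
    and Dc: "D \<in> common_refinement Ap" and dimD: "aff_dim D = int (card V) - 1"
    and pD: "p \<in> D" and pV: "p \<in> rel_interior (convex hull V)"
  shows "\<exists>v\<in>V. D \<subseteq> convex hull (insert a (V - {v}))"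
proof -
  have fV: "finite V" using fAp VAp finite_subset by blast
  obtain \<pi> where \<pi>pos: "\<forall>x\<in>V. 0 < \<pi> x" and \<pi>sum: "sum \<pi> V = 1" and \<pi>p: "(\<Sum>x\<in>V. \<pi> x *\<^sub>R x) = p"
    using pV rel_interior_convex_hull_explicit[OF indV] by blast
  have "\<forall>b\<in>Ap. \<exists>k. sum k V = 1 \<and> (\<Sum>u\<in>V. k u *\<^sub>R u) = b"
    using AH affine_hull_finite[OF fV] by blast
  then obtain \<kappa> where \<kappa>: "\<And>b. b \<in> Ap \<Longrightarrow> sum (\<kappa> b) V = 1 \<and> (\<Sum>u\<in>V. \<kappa> b u *\<^sub>R u) = b"
    by metis
  define M where "M = 1 + (\<Sum>b\<in>Ap. \<Sum>u\<in>V. \<bar>\<kappa> b u\<bar> / \<pi> u)"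
  have M1: "M \<ge> 1" unfolding M_def using \<pi>pos by (auto intro!: sum_nonneg)
  define h where "h = (\<lambda>x. if x \<in> V then 0 else if x = a then -1 else M)"
  from Dc obtain c where c: "\<forall>h. c h \<in> reg_cells Ap h" and Deq: "D = (\<Inter>h. c h)"
    unfolding common_refinement_def by blast
  have Dch: "D \<subseteq> c h" using Deq by blast
  from c obtain S w c0 where chS: "c h = convex hull S" and SAp: "S \<subseteq> Ap"
    and le: "\<forall>x\<in>Ap. w \<bullet> x + c0 \<le> h x" and Seq: "S = {x\<in>Ap. w \<bullet> x + c0 = h x}"
    unfolding reg_cells_def by blast
  define ell where "ell = (\<lambda>x. w \<bullet> x + c0)"
  have fS: "finite S" using SAp fAp finite_subset by blast
  have ellaff: "\<And>k X. sum k X = 1 \<Longrightarrow> ell (\<Sum>x\<in>X. k x *\<^sub>R x) = (\<Sum>x\<in>X. k x * ell x)"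
    unfolding ell_def by (rule affine_eval)
  have pS: "p \<in> convex hull S" using pD Dch chS by blast
  then obtain \<mu> where \<mu>0: "\<forall>x\<in>S. 0 \<le> \<mu> x" and \<mu>s: "sum \<mu> S = 1" and \<mu>p: "(\<Sum>x\<in>S. \<mu> x *\<^sub>R x) = p"
    using convex_hull_finite[OF fS] by blast
  have hge: "\<And>x. h x \<ge> -1" using M1 unfolding h_def by auto
  have "ell p = (\<Sum>x\<in>S. \<mu> x * ell x)" using ellaff[OF \<mu>s] \<mu>p by simp
  also have "\<dots> = (\<Sum>x\<in>S. \<mu> x * h x)" using Seq unfolding ell_def by (intro sum.cong) auto
  also have "\<dots> \<ge> (\<Sum>x\<in>S. \<mu> x * (-1))" using \<mu>0 hge by (intro sum_mono mult_left_mono) auto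
  also have "(\<Sum>x\<in>S. \<mu> x * (-1)) = -1" using \<mu>s by (simp add: sum_negf)
  finally have ellp: "ell p \<ge> -1" .
  have ellV: "\<And>u. u \<in> V \<Longrightarrow> ell u \<le> 0" using le VAp unfolding ell_def h_def by force
  have ellp2: "ell p = (\<Sum>u\<in>V. \<pi> u * ell u)" using ellaff[OF \<pi>sum] \<pi>p by simp
  have ellbd: "\<bar>ell u\<bar> \<le> 1 / \<pi> u" if uV: "u \<in> V" for u
  proof -
    have "\<pi> u * (- ell u) \<le> (\<Sum>u'\<in>V. \<pi> u' * (- ell u'))"
      using uV fV \<pi>pos ellV by (intro member_le_sum) (force simp: mult_le_0_iff)+
    also have "\<dots> = - ell p" using ellp2 by (simp add: sum_negf)
    finally have "\<pi> u * (- ell u) \<le> 1" using ellp by linarith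
    moreover have "\<pi> u > 0" using \<pi>pos uV by auto
    moreover have "ell u \<le> 0" using ellV uV by auto
    ultimately show ?thesis by (simp add: field_simps abs_if)
  qed
  have ellAp: "ell b \<le> M - 1" if bAp: "b \<in> Ap" for b
  proof -
    have "ell b = (\<Sum>u\<in>V. \<kappa> b u * ell u)" using ellaff[of "\<kappa> b" V] \<kappa>[OF bAp] by metis
    also have "\<dots> \<le> (\<Sum>u\<in>V. \<bar>\<kappa> b u\<bar> / \<pi> u)"
    proof (rule sum_mono)
      fix u assume uV: "u \<in> V"
      have "\<kappa> b u * ell u \<le> \<bar>\<kappa> b u\<bar> * \<bar>ell u\<bar>" by (metis abs_ge_self abs_mult)
      also have "\<dots> \<le> \<bar>\<kappa> b u\<bar> * (1 / \<pi> u)" using ellbd[OF uV] by (intro mult_left_mono) auto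
      finally show "\<kappa> b u * ell u \<le> \<bar>\<kappa> b u\<bar> / \<pi> u" by simp
    qed
    also have "\<dots> \<le> (\<Sum>b\<in>Ap. \<Sum>u\<in>V. \<bar>\<kappa> b u\<bar> / \<pi> u)"
      using bAp fAp \<pi>pos by (intro member_le_sum) (auto intro!: sum_nonneg)
    finally show "ell b \<le> M - 1" unfolding M_def by simp
  qed
  have SsubV: "S \<subseteq> insert a V"
  proof
    fix x assume xS: "x \<in> S"
    hence xAp: "x \<in> Ap" and lx: "ell x = h x" using Seq ell_def by auto
    show "x \<in> insert a V"
    proof (rule ccontr)
      assume "x \<notin> insert a V"
      hence "h x = M" unfolding h_def by auto
      thus False using ellAp[OF xAp] lx by simp
    qed
  qed
  have cardS: "card S \<ge> card V"
  proof -
    have "aff_dim D \<le> aff_dim (convex hull S)" using Dch chS by (simp add: aff_dim_subset)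
    also have "\<dots> = aff_dim S" by (rule aff_dim_convex_hull)
    also have "\<dots> \<le> int (card S) - 1" using aff_dim_le_card[OF fS] .
    finally show ?thesis using dimD by simp
  qed
  have ella: "ell a = (\<Sum>u\<in>V. \<kappa> a u * ell u)" using ellaff[of "\<kappa> a" V] \<kappa>[OF aAp] by metis
  have ha: "h a = -1" using aV unfolding h_def by simp
  have nall: "\<not> V \<subseteq> S"
  proof
    assume "V \<subseteq> S"
    hence "\<forall>u\<in>V. ell u = 0" using Seq unfolding ell_def h_def by auto
    hence "ell a = 0" using ella by simp
    moreover have "ell a \<le> -1" using le aAp ha unfolding ell_def by auto
    ultimately show False by simp
  qed
  have aS: "a \<in> S"
  proof (rule ccontr)
    assume "a \<notin> S"
    hence "S \<subseteq> V" using SsubV by blast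
    hence "S = V" using card_seteq[OF fV] cardS by blast
    thus False using nall by simp
  qed
  obtain v where vV: "v \<in> V" and vS: "v \<notin> S" using nall by blast
  have sub: "S - {a} \<subseteq> V - {v}" using SsubV vS by blast
  moreover have "card (V - {v}) \<le> card (S - {a})" using cardS aS vV fS fV by (simp add: card_Diff_singleton)
  ultimately have "S - {a} = V - {v}" using card_seteq fV by (metis finite_Diff)
  hence "S = insert a (V - {v})" using aS by blast
  thus ?thesis using Dch chS vV by blast
qed

theorem lemma3p4:
  fixes Ap Am :: "(real ^ 'n) set" and D :: "(real ^ 'n) set"
    and \<Delta> :: "nat \<Rightarrow> (real ^ 'n) set" and r j :: nat
  assumes "finite Ap" and "finite Am" and "Ap \<inter> Am = {}"
    and "nonseparable Ap Am"
    and "D \<in> common_refinement_dim (pair_dim Ap Am) Ap" and "Am \<subseteq> D"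
    and "bij_betw \<Delta> {1..r} (Lambda (pair_dim Ap Am) Ap D)"
    and "j \<in> {1..r}"
  shows "(\<forall>a \<in> Ap - vertices (\<Delta> j).
            \<exists>!\<Gamma>. \<Gamma> facet_of \<Delta> j \<and>
                 convex hull (\<Gamma> \<union> {a}) \<in> Lambda (pair_dim Ap Am) Ap D)
       \<and> (\<exists>\<phi>. (\<forall>a \<in> Ap - vertices (\<Delta> j).
                 \<phi> a \<in> {1..r} - {j} \<and>
                 (\<exists>\<Gamma>. \<Gamma> facet_of \<Delta> j \<and> \<Delta> (\<phi> a) = convex hull (\<Gamma> \<union> {a})))
             \<and> inj_on \<phi> (Ap - vertices (\<Delta> j)))"
proof -
  define d where "d = pair_dim Ap Am"
  define L where "L = Lambda d Ap D"
  have bij: "bij_betw \<Delta> {1..r} L" using assms(7) L_def d_def by simp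
  have img: "\<Delta> ` {1..r} = L" using bij unfolding bij_betw_def by blast
  have \<Delta>jL: "\<Delta> j \<in> L" using img assms(8) by blast
  hence simp_j: "d simplex (\<Delta> j)" and vertAp: "vertices (\<Delta> j) \<subseteq> Ap"
    and relj: "rel_interior D \<subseteq> rel_interior (\<Delta> j)"
    unfolding L_def Lambda_def by auto
  obtain V where fV: "finite V" and indV: "\<not> affine_dependent V" and cardV: "int (card V) = d + 1"
    and \<Delta>jV: "\<Delta> j = convex hull V"
    using simp_j unfolding simplex by blast
  have vertV: "vertices (\<Delta> j) = V"
    using \<Delta>jV indV extreme_point_of_convex_hull_affine_independent unfolding vertices_def by auto
  have VAp: "V \<subseteq> Ap" using vertAp vertV by simp
  from assms(5) have Dc: "D \<in> common_refinement Ap" and dimD: "aff_dim D = d"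
    unfolding common_refinement_dim_def d_def by auto
  have Dne: "D \<noteq> {}" using Dc unfolding common_refinement_def by auto
  have Dconv: "convex D"
  proof -
    from Dc obtain c where c: "\<forall>h. c h \<in> reg_cells Ap h" and Deq: "D = (\<Inter>h. c h)"
      unfolding common_refinement_def by blast
    have "convex (c h)" for h using c[rule_format, of h] unfolding reg_cells_def by (auto intro: convex_convex_hull)
    thus ?thesis using Deq by (auto intro!: convex_INT)
  qed
  obtain p where pD: "p \<in> rel_interior D" using Dne Dconv rel_interior_eq_empty by blast
  have pD': "p \<in> D" using pD rel_interior_subset by blast
  have pV: "p \<in> rel_interior (convex hull V)" using pD relj \<Delta>jV by (metis subsetD)
  have Vne: "V \<noteq> {}" using pV by auto
  have AH: "Ap \<subseteq> affine hull V"
  proof -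
    have sub: "affine hull V \<subseteq> affine hull (Ap \<union> Am)" using VAp by (intro hull_mono) auto
    have "aff_dim (affine hull V) = d" using aff_dim_simplex[OF simp_j] \<Delta>jV by (simp add: aff_dim_convex_hull)
    moreover have "aff_dim (affine hull (Ap \<union> Am)) = d"
      unfolding d_def pair_dim_def by (simp add: aff_dim_convex_hull)
    ultimately have "affine hull V = affine hull (Ap \<union> Am)"
      using affine_dim_equal[OF affine_affine_hull affine_affine_hull _ sub] Vne by auto
    thus ?thesis using hull_subset[of "Ap \<union> Am" affine] by blast
  qed
  have hullU: "convex hull (convex hull X \<union> {b}) = convex hull (insert b X)" for X and b :: "real ^ 'n"
    by (metis hull_Un_left insert_is_Un Un_commute)
  have char: "\<exists>v\<in>V. \<Gamma> = convex hull (V - {v}) \<and>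
      convex hull (\<Gamma> \<union> {a}) = convex hull (insert a (V - {v})) \<and>
      \<not> affine_dependent (insert a (V - {v}))"
    if aA: "a \<in> Ap - V" and \<Gamma>f: "\<Gamma> facet_of \<Delta> j" and \<Gamma>L: "convex hull (\<Gamma> \<union> {a}) \<in> L" for a \<Gamma>
  proof -
    have "\<Gamma> facet_of convex hull V" using \<Gamma>f \<Delta>jV by simp
    then obtain v where vV: "v \<in> V" and \<Gamma>eq: "\<Gamma> = convex hull (V - {v})"
      using facet_of_convex_hull_affine_independent[OF indV, of \<Gamma>] by blast
    have hh: "convex hull (\<Gamma> \<union> {a}) = convex hull (insert a (V - {v}))" unfolding \<Gamma>eq by (rule hullU)
    have "convex hull (insert a (V - {v})) \<in> L" using \<Gamma>L unfolding hh .
    hence "d simplex (convex hull (insert a (V - {v})))" unfolding L_def Lambda_def by blast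
    hence "aff_dim (convex hull (insert a (V - {v}))) = d" by (rule aff_dim_simplex)
    hence "aff_dim (insert a (V - {v})) = d" by (simp add: aff_dim_convex_hull)
    moreover have "card (insert a (V - {v})) = card V" using card_swap[OF fV vV] aA by simp
    ultimately have "\<not> affine_dependent (insert a (V - {v}))"
      using affine_independent_iff_card[of "insert a (V - {v})"] fV cardV by simp
    thus ?thesis using vV \<Gamma>eq hh by blast
  qed
  have part1: "\<forall>a \<in> Ap - vertices (\<Delta> j). \<exists>!\<Gamma>. \<Gamma> facet_of \<Delta> j \<and> convex hull (\<Gamma> \<union> {a}) \<in> L"
  proof
    fix a assume "a \<in> Ap - vertices (\<Delta> j)"
    hence aA: "a \<in> Ap - V" using vertV by simp
    have aAp: "a \<in> Ap" and aV: "a \<notin> V" using aA by auto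
    have aH: "a \<in> affine hull V" using AH aAp by (rule subsetD)
    have dimD': "aff_dim D = int (card V) - 1" using dimD cardV by simp
    obtain v where vV: "v \<in> V" and Dsub: "D \<subseteq> convex hull (insert a (V - {v}))"
      using exist_cell[OF assms(1) VAp indV AH aAp aV Dc dimD' pD' pV] by blast
    define W where "W = insert a (V - {v})"
    have cardW: "int (card W) = d + 1" unfolding W_def using card_swap[OF fV vV] aA cardV by simp
    have fW: "finite W" unfolding W_def using fV by simp
    have "aff_dim D \<le> aff_dim (convex hull W)" using Dsub W_def by (simp add: aff_dim_subset)
    hence "aff_dim D \<le> aff_dim W" by (simp add: aff_dim_convex_hull)
    moreover have "aff_dim W \<le> int (card W) - 1" by (rule aff_dim_le_card[OF fW])
    ultimately have dimW: "aff_dim W = d" using dimD cardW by simp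
    have indW: "\<not> affine_dependent W" using affine_independent_iff_card[of W] dimW cardW fW by simp
    have simpW: "d simplex (convex hull W)" unfolding simplex_def using indW cardW by blast
    have WAp: "W \<subseteq> Ap" unfolding W_def using VAp aAp by blast
    have vertW: "vertices (convex hull W) \<subseteq> Ap"
      using WAp extreme_point_of_convex_hull unfolding vertices_def by blast
    have relW: "rel_interior D \<subseteq> rel_interior (convex hull W)"
    proof (rule subset_rel_interior)
      show DW: "D \<subseteq> convex hull W" using Dsub W_def by simp
      have "affine hull D \<subseteq> affine hull (convex hull W)" using DW by (rule hull_mono)
      moreover have "aff_dim (affine hull D) = aff_dim (affine hull (convex hull W))"
        using dimD dimW aff_dim_convex_hull by simp
      ultimately show "affine hull D = affine hull (convex hull W)"
        using affine_dim_equal[OF affine_affine_hull affine_affine_hull, of D "convex hull W"] Dne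
        by simp
    qed
    have \<sigma>L: "convex hull W \<in> L" unfolding L_def Lambda_def using simpW vertW relW by simp
    have V1: "V - {v} \<noteq> {}"
    proof
      assume "V - {v} = {}"
      hence "V = {v}" using vV by blast
      hence "affine hull V = {v}" by simp
      thus False using aH aV \<open>V = {v}\<close> by simp
    qed
    define \<Gamma> where "\<Gamma> = convex hull (V - {v})"
    have "\<Gamma> \<noteq> {}" unfolding \<Gamma>_def using V1 by simp
    hence "\<Gamma> facet_of convex hull V"
      using facet_of_convex_hull_affine_independent[OF indV, of \<Gamma>] vV \<Gamma>_def by blast
    hence \<Gamma>f: "\<Gamma> facet_of \<Delta> j" using \<Delta>jV by simp
    have hh: "convex hull (\<Gamma> \<union> {a}) = convex hull W" unfolding \<Gamma>_def W_def by (rule hullU)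
    show "\<exists>!\<Gamma>. \<Gamma> facet_of \<Delta> j \<and> convex hull (\<Gamma> \<union> {a}) \<in> L"
    proof (rule ex1I[of _ \<Gamma>])
      show "\<Gamma> facet_of \<Delta> j \<and> convex hull (\<Gamma> \<union> {a}) \<in> L" using \<Gamma>f \<sigma>L unfolding hh by blast
    next
      fix \<Gamma>' assume H: "\<Gamma>' facet_of \<Delta> j \<and> convex hull (\<Gamma>' \<union> {a}) \<in> L"
      then obtain v' where v'V: "v' \<in> V" and \<Gamma>'eq: "\<Gamma>' = convex hull (V - {v'})"
        and hh': "convex hull (\<Gamma>' \<union> {a}) = convex hull (insert a (V - {v'}))"
        and ind': "\<not> affine_dependent (insert a (V - {v'}))"
        using char[OF aA conjunct1[OF H] conjunct2[OF H]] by blast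
      have "convex hull (insert a (V - {v'})) \<in> L" using conjunct2[OF H] unfolding hh' .
      hence "rel_interior D \<subseteq> rel_interior (convex hull (insert a (V - {v'})))"
        unfolding L_def Lambda_def by blast
      hence p2: "p \<in> rel_interior (convex hull (insert a (V - {v'})))" using pD by blast
      have p1: "p \<in> rel_interior (convex hull (insert a (V - {v})))" using relW pD unfolding W_def by blast
      have "v' = v"
        by (rule uniq_vertex[OF indV aV aH v'V vV ind' indW[unfolded W_def] pV p2 p1])
      thus "\<Gamma>' = \<Gamma>" using \<Gamma>'eq \<Gamma>_def by simp
    qed
  qed
  define \<phi> where "\<phi> a = (SOME i. i \<in> {1..r} \<and> (\<exists>\<Gamma>. \<Gamma> facet_of \<Delta> j \<and> \<Delta> i = convex hull (\<Gamma> \<union> {a})))" for a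
  have \<phi>p: "\<phi> a \<in> {1..r} \<and> (\<exists>\<Gamma>. \<Gamma> facet_of \<Delta> j \<and> \<Delta> (\<phi> a) = convex hull (\<Gamma> \<union> {a}))"
    if "a \<in> Ap - vertices (\<Delta> j)" for a
  proof -
    have "\<exists>\<Gamma>. \<Gamma> facet_of \<Delta> j \<and> convex hull (\<Gamma> \<union> {a}) \<in> L"
      using ex1_implies_ex[OF bspec[OF part1 that]] .
    then obtain \<Gamma> where G1: "\<Gamma> facet_of \<Delta> j" and G2: "convex hull (\<Gamma> \<union> {a}) \<in> L" by blast
    have "convex hull (\<Gamma> \<union> {a}) \<in> \<Delta> ` {1..r}" using G2 img by simp
    then obtain i where "i \<in> {1..r}" "convex hull (\<Gamma> \<union> {a}) = \<Delta> i" by (rule imageE)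
    hence "\<exists>i. i \<in> {1..r} \<and> (\<exists>\<Gamma>. \<Gamma> facet_of \<Delta> j \<and> \<Delta> i = convex hull (\<Gamma> \<union> {a}))" using G1 by blast
    thus ?thesis unfolding \<phi>_def by (rule someI_ex)
  qed
  have \<phi>v: "\<exists>v\<in>V. vertices (\<Delta> (\<phi> a)) = insert a (V - {v})"
    if aa: "a \<in> Ap - vertices (\<Delta> j)" for a
  proof -
    from \<phi>p[OF aa] obtain \<Gamma> where \<Gamma>f: "\<Gamma> facet_of \<Delta> j" and eq: "\<Delta> (\<phi> a) = convex hull (\<Gamma> \<union> {a})"
      and i: "\<phi> a \<in> {1..r}" by blast
    have "\<Delta> (\<phi> a) \<in> L" using img i by blast
    hence cL: "convex hull (\<Gamma> \<union> {a}) \<in> L" unfolding eq .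
    have aA: "a \<in> Ap - V" using aa vertV by simp
    obtain v where vV: "v\<in>V" and hh: "convex hull (\<Gamma> \<union> {a}) = convex hull (insert a (V - {v}))"
      and ind: "\<not> affine_dependent (insert a (V - {v}))"
      using char[OF aA \<Gamma>f cL] by blast
    have "vertices (\<Delta> (\<phi> a)) = insert a (V - {v})"
      unfolding eq hh vertices_def using extreme_point_of_convex_hull_affine_independent[OF ind] by blast
    thus ?thesis using vV by blast
  qed
  have P1: "\<forall>a \<in> Ap - vertices (\<Delta> j). \<exists>!\<Gamma>. \<Gamma> facet_of \<Delta> j \<and>
        convex hull (\<Gamma> \<union> {a}) \<in> Lambda (pair_dim Ap Am) Ap D"
    using part1 unfolding L_def d_def .
  have P2: "\<phi> a \<in> {1..r} - {j} \<and> (\<exists>\<Gamma>. \<Gamma> facet_of \<Delta> j \<and> \<Delta> (\<phi> a) = convex hull (\<Gamma> \<union> {a}))"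
    if aa: "a \<in> Ap - vertices (\<Delta> j)" for a
  proof -
    obtain v where "v \<in> V" and vv: "vertices (\<Delta> (\<phi> a)) = insert a (V - {v})" using \<phi>v[OF aa] by blast
    have "a \<notin> vertices (\<Delta> j)" using aa by blast
    moreover have "a \<in> vertices (\<Delta> (\<phi> a))" using vv by blast
    ultimately have "\<phi> a \<noteq> j" by metis
    thus ?thesis using \<phi>p[OF aa] by blast
  qed
  have P3: "inj_on \<phi> (Ap - vertices (\<Delta> j))"
  proof (rule inj_onI)
    fix a b assume aa: "a \<in> Ap - vertices (\<Delta> j)" and bb: "b \<in> Ap - vertices (\<Delta> j)" and e: "\<phi> a = \<phi> b"
    obtain v where va: "vertices (\<Delta> (\<phi> a)) = insert a (V - {v})" using \<phi>v[OF aa] by blast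
    obtain v' where vb: "vertices (\<Delta> (\<phi> b)) = insert b (V - {v'})" using \<phi>v[OF bb] by blast
    have "a \<in> vertices (\<Delta> (\<phi> b))" using va e by simp
    hence "a \<in> insert b (V - {v'})" using vb by simp
    moreover have "a \<notin> V" using aa vertV by simp
    ultimately show "a = b" by blast
  qed
  show ?thesis using P1 P2 P3 by blast
qed

end
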